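(* Let $\mathcal C$ be a category, $A$ a zigzag of length $n$ in $\mathcal C$, and $i\in[n+1]$ (i.e. $0\le i\le n$). Let $A'$ be the zigzag of length $n+1$ obtained from $A$ by inserting the identity cospan $A(r_i)\xrightarrow{\mathrm{id}}A(r_i)\xleftarrow{\mathrm{id}}A(r_i)$ at position $i$, i.e. $A'(r_j)=A(r_j)$ and $A'(s_j)=A(s_j)$ for $j<i$, $A'(r_i)=A'(s_i)=A'(r_{i+1})=A(r_i)$ with identity legs, and $A'(r_{j+1})=A(r_j)$, $A'(s_{j+1})=A(s_j)$ for $j\ge i$ (with the cospan legs of $A$). Then the zigzag map $f:A\to A'$ whose singular map is the face map $d_i:[n]\to[n+1]$ and all of whose regular and singular slices are identities is $\pi$-cocartesian.
   Context: Notation: for $n\ge 0$, $[n]$ denotes $\{0,\dots,n-1\}$; $\Delta_+$ is the category of these finite total orders and order-preserving maps. The $i$-th face map $d_i:[n]\to[n+1]$ is the unique injective order-preserving map omitting $i$ from its image. For monotone $\varphi:[n]\to[m]$ define $\hat\varphi:[m+1]\to[n+1]$ by $\hat\varphi(i)=\min(\{j\in[n]:\varphi(j)\ge i\}\cup\{n\})$. Zigzags: in a category $\mathcal C$, a zigzag $X$ of length $n$ is a diagram $X(r_0)\xrightarrow{x_0} X(s_0)\xleftarrow{x'_0} X(r_1)\to\cdots\xrightarrow{x_{n-1}} X(s_{n-1})\xleftarrow{x'_{n-1}} X(r_n)$. A zigzag map $f:X\to Y$ (lengths $n$, $m$) consists of a monotone $f_s:[n]\to[m]$, regular slices $f(r_i):X(r_{\hat{f_s}(i)})\to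 Y(r_i)$ for $0\le i\le m$ and singular slices $f(s_j):X(s_j)\to Y(s_{f_s(j)})$ for $0\le j<n$, such that for each $0\le i<m$: if $f_s^{-1}(i)\neq\emptyset$ with least element $p$, greatest $q$, then $f(s_p)\circ x_p=y_i\circ f(r_i)$, $f(s_q)\circ x'_q=y'_i\circ f(r_{i+1})$, $f(s_j)\circ x'_j=f(s_{j+1})\circ x_{j+1}$ for $p\le j<q$; if $f_s^{-1}(i)=\emptyset$ then $y_i\circ f(r_i)=y'_i\circ f(r_{i+1})$. Composition: $(g\circ f)_s=g_s\circ f_s$, $(g\circ f)(s_j)=g(s_{f_s(j)})\circ f(s_j)$, $(g\circ f)(r_i)=g(r_i)\circ f(r_{\hat{g_s}(i)})$. This gives the category $Z(\mathcal C)$. The functor $\pi:Z(\mathcal C)\to\Delta_+$ sends a zigzag of length $n$ to $[n]$ and $f$ to $f_s$. A map $f:x\to y$ is $\pi$-cocartesian if for every map $h:x\to y'$ and every $u:\pi(y)\to\pi(y')$ with $u\circ\pi(f)=\pi(h)$ there is a unique $v:y\to y'$ with $v\circ f=h$ and $\pi(v)=u$. *)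

theory Defs
  imports Main
begin

record ('o, 'm) category =
  Obj :: "'o set"
  Arr :: "'m set"
  dom :: "'m \<Rightarrow> 'o"
  cod :: "'m \<Rightarrow> 'o"
  comp :: "'m \<Rightarrow> 'm \<Rightarrow> 'm"   (* comp C g f = g \<circ> f *)
  idm :: "'o \<Rightarrow> 'm"

definition is_category :: "('o, 'm) category \<Rightarrow> bool" where
  "is_category C \<longleftrightarrow>
     (\<forall>f\<in>Arr C. dom C f \<in> Obj C \<and> cod C f \<in> Obj C) \<and>
     (\<forall>a\<in>Obj C. idm C a \<in> Arr C \<and> dom C (idm C a) = a \<and> cod C (idm C a) = a) \<and>
     (\<forall>f\<in>Arr C. \<forall>g\<in>Arr C. cod C f = dom C g \<longrightarrow>
         comp C g f \<in> Arr C \<and> dom C (comp C g f) = dom C f \<and> cod C (comp C g f) = cod C g) \<and>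
     (\<forall>f\<in>Arr C. comp C f (idm C (dom C f)) = f \<and> comp C (idm C (cod C f)) f = f) \<and>
     (\<forall>f\<in>Arr C. \<forall>g\<in>Arr C. \<forall>h\<in>Arr C. cod C f = dom C g \<longrightarrow> cod C g = dom C h \<longrightarrow>
         comp C h (comp C g f) = comp C (comp C h g) f)"

definition is_hom :: "('o, 'm) category \<Rightarrow> 'm \<Rightarrow> 'o \<Rightarrow> 'o \<Rightarrow> bool" where
  "is_hom C f a b \<longleftrightarrow> f \<in> Arr C \<and> dom C f = a \<and> cod C f = b"

section \<open>The category \<Delta>+ (morphisms [n] \<rightarrow> [m], [n] = {0..<n}), extensional\<close>

definition is_dmap :: "nat \<Rightarrow> nat \<Rightarrow> (nat \<Rightarrow> nat) \<Rightarrow> bool" where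
  "is_dmap n m \<phi> \<longleftrightarrow> (\<forall>j<n. \<phi> j < m) \<and> (\<forall>j k. j \<le> k \<longrightarrow> k < n \<longrightarrow> \<phi> j \<le> \<phi> k)
                     \<and> (\<forall>j\<ge>n. \<phi> j = undefined)"

text \<open>hat: for \<phi> : [n] \<rightarrow> [m], hat n \<phi> : [m+1] \<rightarrow> [n+1]\<close>
definition hat :: "nat \<Rightarrow> (nat \<Rightarrow> nat) \<Rightarrow> nat \<Rightarrow> nat" where
  "hat n \<phi> i = Min ({j. j < n \<and> \<phi> j \<ge> i} \<union> {n})"

definition face :: "nat \<Rightarrow> nat \<Rightarrow> nat \<Rightarrow> nat" where
  "face n i j = (if j < n then (if j < i then j else Suc j) else undefined)"

record ('o, 'm) zigzag =
  zlen :: nat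
  zr :: "nat \<Rightarrow> 'o"    (* regular objects X(r_i), 0 \<le> i \<le> n *)
  zs :: "nat \<Rightarrow> 'o"    (* singular objects X(s_j), 0 \<le> j < n *)
  zf :: "nat \<Rightarrow> 'm"    (* x_j  : X(r_j) \<rightarrow> X(s_j) *)
  zb :: "nat \<Rightarrow> 'm"    (* x'_j : X(r_{j+1}) \<rightarrow> X(s_j) *)

definition is_zigzag :: "('o, 'm) category \<Rightarrow> ('o, 'm) zigzag \<Rightarrow> bool" where
  "is_zigzag C X \<longleftrightarrow>
     (\<forall>i\<le>zlen X. zr X i \<in> Obj C) \<and>
     (\<forall>j<zlen X. zs X j \<in> Obj C \<and> is_hom C (zf X j) (zr X j) (zs X j)
                 \<and> is_hom C (zb X j) (zr X (Suc j)) (zs X j))"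

record 'm zmap =
  smap :: "nat \<Rightarrow> nat"
  rsl :: "nat \<Rightarrow> 'm"   (* f(r_i) : X(r_{hat f_s i}) \<rightarrow> Y(r_i) *)
  ssl :: "nat \<Rightarrow> 'm"   (* f(s_j) : X(s_j) \<rightarrow> Y(s_{f_s j}) *)

text \<open>Zigzag maps; entries outside the meaningful index ranges are fixed to undefined
  so that maps are determined by their meaningful data.\<close>
definition is_zmap :: "('o, 'm) category \<Rightarrow> ('o, 'm) zigzag \<Rightarrow> ('o, 'm) zigzag \<Rightarrow> 'm zmap \<Rightarrow> bool" where
  "is_zmap C X Y f \<longleftrightarrow>
     (let n = zlen X; m = zlen Y; fs = smap f in
      is_dmap n m fs \<and>
      (\<forall>i\<le>m. is_hom C (rsl f i) (zr X (hat n fs i)) (zr Y i)) \<and>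
      (\<forall>j<n. is_hom C (ssl f j) (zs X j) (zs Y (fs j))) \<and>
      (\<forall>i>m. rsl f i = undefined) \<and> (\<forall>j\<ge>n. ssl f j = undefined) \<and>
      (\<forall>i<m. let P = {j. j < n \<and> fs j = i} in
         (if P \<noteq> {} then
            comp C (ssl f (Min P)) (zf X (Min P)) = comp C (zf Y i) (rsl f i) \<and>
            comp C (ssl f (Max P)) (zb X (Max P)) = comp C (zb Y i) (rsl f (Suc i)) \<and>
            (\<forall>j. Min P \<le> j \<longrightarrow> j < Max P \<longrightarrow>
                 comp C (ssl f j) (zb X j) = comp C (ssl f (Suc j)) (zf X (Suc j)))
          else comp C (zf Y i) (rsl f i) = comp C (zb Y i) (rsl f (Suc i)))))"

text \<open>Composition g \<circ> f for f : X \<rightarrow> Y, g : Y \<rightarrow> Z.\<close>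
definition zcomp :: "('o, 'm) category \<Rightarrow> ('o, 'm) zigzag \<Rightarrow> ('o, 'm) zigzag \<Rightarrow> ('o, 'm) zigzag
                      \<Rightarrow> 'm zmap \<Rightarrow> 'm zmap \<Rightarrow> 'm zmap" where
  "zcomp C X Y Z g f =
     \<lparr> smap = (\<lambda>j. if j < zlen X then smap g (smap f j) else undefined),
       rsl = (\<lambda>i. if i \<le> zlen Z then comp C (rsl g i) (rsl f (hat (zlen Y) (smap g) i)) else undefined),
       ssl = (\<lambda>j. if j < zlen X then comp C (ssl g (smap f j)) (ssl f j) else undefined) \<rparr>"

text \<open>\<pi>-cocartesian maps for \<pi> : Z(C) \<rightarrow> \<Delta>+\<close>
definition pi_cocartesian :: "('o, 'm) category \<Rightarrow> ('o, 'm) zigzag \<Rightarrow> ('o, 'm) zigzag \<Rightarrow> 'm zmap \<Rightarrow> bool" where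
  "pi_cocartesian C X Y f \<longleftrightarrow>
     (\<forall>Y' h u. is_zigzag C Y' \<longrightarrow> is_zmap C X Y' h \<longrightarrow> is_dmap (zlen Y) (zlen Y') u \<longrightarrow>
        (\<forall>j<zlen X. u (smap f j) = smap h j) \<longrightarrow>
        (\<exists>!v. is_zmap C Y Y' v \<and> smap v = u \<and> zcomp C X Y Y' v f = h))"

definition insert_id :: "('o, 'm) category \<Rightarrow> ('o, 'm) zigzag \<Rightarrow> nat \<Rightarrow> ('o, 'm) zigzag" where
  "insert_id C A i =
     \<lparr> zlen = Suc (zlen A),
       zr = (\<lambda>j. if j \<le> i then zr A j else zr A (j - 1)),
       zs = (\<lambda>j. if j < i then zs A j else if j = i then zr A i else zs A (j - 1)),
       zf = (\<lambda>j. if j < i then zf A j else if j = i then idm C (zr A i) else zf A (j - 1)),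
       zb = (\<lambda>j. if j < i then zb A j else if j = i then idm C (zr A i) else zb A (j - 1)) \<rparr>"

definition insert_map :: "('o, 'm) category \<Rightarrow> ('o, 'm) zigzag \<Rightarrow> nat \<Rightarrow> 'm zmap" where
  "insert_map C A i =
     \<lparr> smap = face (zlen A) i,
       rsl = (\<lambda>j. if j \<le> Suc (zlen A) then idm C (zr (insert_id C A i) j) else undefined),
       ssl = (\<lambda>j. if j < zlen A then idm C (zs A j) else undefined) \<rparr>"

end

theory Submission
  imports Defs
begin

lemma hat_eqI:
  assumes "H \<le> n" "H < n \<Longrightarrow> k \<le> \<phi> H" "\<And>j. j < H \<Longrightarrow> \<phi> j < k"
  shows "hat n \<phi> k = H"
  unfolding hat_def
proof (rule Min_eqI)
  show "finite ({j. j < n \<and> k \<le> \<phi> j} \<union> {n})" by auto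
  show "H \<in> {j. j < n \<and> k \<le> \<phi> j} \<union> {n}" using assms by (cases "H < n") auto
  fix y assume "y \<in> {j. j < n \<and> k \<le> \<phi> j} \<union> {n}"
  then show "H \<le> y" using assms by (metis (mono_tags, lifting) Un_iff mem_Collect_eq not_le singletonD)
qed

lemma hat_props:
  shows "hat n \<phi> k \<le> n" and "hat n \<phi> k < n \<Longrightarrow> k \<le> \<phi> (hat n \<phi> k)"
    and "j < hat n \<phi> k \<Longrightarrow> \<phi> j < k"
proof -
  let ?S = "{j. j < n \<and> k \<le> \<phi> j} \<union> {n}"
  have fin: "finite ?S" by auto
  have mem: "hat n \<phi> k \<in> ?S" unfolding hat_def by (rule Min_in) (use fin in auto)
  show le: "hat n \<phi> k \<le> n" unfolding hat_def by (rule Min_le) (use fin in auto)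
  show "hat n \<phi> k < n \<Longrightarrow> k \<le> \<phi> (hat n \<phi> k)" using mem by auto
  assume "j < hat n \<phi> k"
  moreover have "y \<in> ?S \<Longrightarrow> hat n \<phi> k \<le> y" for y unfolding hat_def by (rule Min_le) (use fin in auto)
  ultimately show "\<phi> j < k" using le by (metis (mono_tags, lifting) Un_iff le_trans mem_Collect_eq not_le order.strict_trans2)
qed

lemma hat_cong: "(\<And>j. j < n \<Longrightarrow> \<phi> j = \<psi> j) \<Longrightarrow> hat n \<phi> k = hat n \<psi> k"
  unfolding hat_def by (metis (mono_tags, lifting) Collect_cong)

lemma hat_face: "i \<le> n \<Longrightarrow> k \<le> Suc n \<Longrightarrow> hat n (face n i) k = (if k \<le> i then k else k - 1)"
  by (rule hat_eqI) (auto simp: face_def split: if_splits)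

lemma hat_comp_face:
  assumes i: "i \<le> n" and mono: "\<And>j k. j \<le> k \<Longrightarrow> k < Suc n \<Longrightarrow> u j \<le> u k"
  shows "hat n (\<lambda>j. u (face n i j)) k = (if hat (Suc n) u k \<le> i then hat (Suc n) u k else hat (Suc n) u k - 1)"
proof -
  let ?H = "hat (Suc n) u k"
  note p = hat_props[where n="Suc n" and \<phi>=u and k=k]
  show ?thesis
  proof (rule hat_eqI)
    show "(if ?H \<le> i then ?H else ?H - 1) \<le> n" using p(1) i by auto
  next
    assume a: "(if ?H \<le> i then ?H else ?H - 1) < n"
    show "k \<le> u (face n i (if ?H \<le> i then ?H else ?H - 1))"
    proof (cases "?H \<le> i")
      case True
      show ?thesis
      proof (cases "?H < i")
        case True then show ?thesis using a p(2) i by (auto simp: face_def)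
      next
        case False
        then have "?H = i" using \<open>?H \<le> i\<close> by auto
        then have "k \<le> u ?H" using p(2) a True by auto
        also have "u ?H \<le> u (Suc i)" using mono[of ?H "Suc i"] \<open>?H = i\<close> a True by auto
        finally show ?thesis using \<open>?H = i\<close> a True by (auto simp: face_def)
      qed
    next
      case False
      then show ?thesis using a p(2) by (auto simp: face_def)
    qed
  next
    fix j assume j: "j < (if ?H \<le> i then ?H else ?H - 1)"
    show "u (face n i j) < k"
    proof (cases "j < i")
      case True then show ?thesis using j p(3)[of j] p(1) i by (auto simp: face_def split: if_splits)
    next
      case False then show ?thesis using j p(3)[of "Suc j"] p(1) by (auto simp: face_def split: if_splits)
    qed
  qed
qed

definition loc where
 "loc C n fs S Fx Bx Fy By R l \<longleftrightarrow>
   (\<forall>j<n. fs j = l \<longrightarrow> (0<j \<longrightarrow> fs (j-1) \<noteq> l) \<longrightarrow> comp C (S j) (Fx j) = comp C (Fy l) (R l)) \<and>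
   (\<forall>j<n. fs j = l \<longrightarrow> (Suc j < n \<longrightarrow> fs (Suc j) \<noteq> l) \<longrightarrow> comp C (S j) (Bx j) = comp C (By l) (R (Suc l))) \<and>
   (\<forall>j. Suc j < n \<longrightarrow> fs j = l \<longrightarrow> fs (Suc j) = l \<longrightarrow> comp C (S j) (Bx j) = comp C (S (Suc j)) (Fx (Suc j))) \<and>
   ((\<forall>j<n. fs j \<noteq> l) \<longrightarrow> comp C (Fy l) (R l) = comp C (By l) (R (Suc l)))"

lemma loc_iff:
  assumes dm: "is_dmap n M fs"
    and P: "P = {j. j < n \<and> fs j = l}"
  shows "(if P \<noteq> {} then
            comp C (S (Min P)) (Fx (Min P)) = comp C (Fy l) (R l) \<and>
            comp C (S (Max P)) (Bx (Max P)) = comp C (By l) (R (Suc l)) \<and>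
            (\<forall>j. Min P \<le> j \<longrightarrow> j < Max P \<longrightarrow>
                 comp C (S j) (Bx j) = comp C (S (Suc j)) (Fx (Suc j)))
          else comp C (Fy l) (R l) = comp C (By l) (R (Suc l))) = loc C n fs S Fx Bx Fy By R l"
proof (cases "P = {}")
  case True
  then have "\<forall>j<n. fs j \<noteq> l" using P by auto
  then show ?thesis using True unfolding loc_def by auto
next
  case False
  define a where "a = Min P"
  define b where "b = Max P"
  have mono: "\<And>j k. j \<le> k \<Longrightarrow> k < n \<Longrightarrow> fs j \<le> fs k" using dm by (auto simp: is_dmap_def)
  have fin: "finite P" using P by auto
  have aP: "a \<in> P" and bP: "b \<in> P" using fin False a_def b_def by auto
  have iv: "(j < n \<and> fs j = l) \<longleftrightarrow> a \<le> j \<and> j \<le> b" for j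
  proof
    assume "j < n \<and> fs j = l"
    then have "j \<in> P" using P by auto
    then show "a \<le> j \<and> j \<le> b" using fin a_def b_def by auto
  next
    assume h: "a \<le> j \<and> j \<le> b"
    have "fs a \<le> fs j" "fs j \<le> fs b" using mono h bP P by auto
    then show "j < n \<and> fs j = l" using aP bP P h by auto
  qed
  have FA: "j < n \<Longrightarrow> fs j = l \<Longrightarrow> (0<j \<longrightarrow> fs (j-1) \<noteq> l) \<longleftrightarrow> j = a" for j
    using iv[of j] iv[of "j-1"] by (cases "j = a") auto
  have FB: "j < n \<Longrightarrow> fs j = l \<Longrightarrow> (Suc j < n \<longrightarrow> fs (Suc j) \<noteq> l) \<longleftrightarrow> j = b" for j
    using iv[of j] iv[of "Suc j"] by (cases "j = b") auto
  have FC: "(Suc j < n \<and> fs j = l \<and> fs (Suc j) = l) \<longleftrightarrow> a \<le> j \<and> j < b" for j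
    using iv[of j] iv[of "Suc j"] by auto
  have an: "a < n \<and> fs a = l" "b < n \<and> fs b = l" using aP bP P by auto
  have "loc C n fs S Fx Bx Fy By R l \<longleftrightarrow>
     comp C (S a) (Fx a) = comp C (Fy l) (R l) \<and>
     comp C (S b) (Bx b) = comp C (By l) (R (Suc l)) \<and>
     (\<forall>j. a \<le> j \<longrightarrow> j < b \<longrightarrow> comp C (S j) (Bx j) = comp C (S (Suc j)) (Fx (Suc j)))"
    unfolding loc_def
  proof (intro iffI conjI)
    assume h: "(\<forall>j<n. fs j = l \<longrightarrow> (0<j \<longrightarrow> fs (j-1) \<noteq> l) \<longrightarrow> comp C (S j) (Fx j) = comp C (Fy l) (R l)) \<and>
   (\<forall>j<n. fs j = l \<longrightarrow> (Suc j < n \<longrightarrow> fs (Suc j) \<noteq> l) \<longrightarrow> comp C (S j) (Bx j) = comp C (By l) (R (Suc l))) \<and>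
   (\<forall>j. Suc j < n \<longrightarrow> fs j = l \<longrightarrow> fs (Suc j) = l \<longrightarrow> comp C (S j) (Bx j) = comp C (S (Suc j)) (Fx (Suc j))) \<and>
   ((\<forall>j<n. fs j \<noteq> l) \<longrightarrow> comp C (Fy l) (R l) = comp C (By l) (R (Suc l)))"
    note h1 = h[THEN conjunct1, rule_format]
    note h2 = h[THEN conjunct2, THEN conjunct1, rule_format]
    note h3 = h[THEN conjunct2, THEN conjunct2, THEN conjunct1, rule_format]
    have ga: "0 < a \<longrightarrow> fs (a - 1) \<noteq> l" using FA[of a] an by simp
    have gb: "Suc b < n \<longrightarrow> fs (Suc b) \<noteq> l" using FB[of b] an by simp
    show "comp C (S a) (Fx a) = comp C (Fy l) (R l)" using h1[OF an(1)[THEN conjunct1] an(1)[THEN conjunct2] ga[rule_format]] .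
    show "comp C (S b) (Bx b) = comp C (By l) (R (Suc l))" using h2[OF an(2)[THEN conjunct1] an(2)[THEN conjunct2] gb[rule_format]] .
    show "\<forall>j. a \<le> j \<longrightarrow> j < b \<longrightarrow> comp C (S j) (Bx j) = comp C (S (Suc j)) (Fx (Suc j))"
    proof (intro allI impI)
      fix j assume "a \<le> j" "j < b"
      then have "Suc j < n \<and> fs j = l \<and> fs (Suc j) = l" using FC[of j] by simp
      then show "comp C (S j) (Bx j) = comp C (S (Suc j)) (Fx (Suc j))" using h3 by blast
    qed
  next
    assume h: "comp C (S a) (Fx a) = comp C (Fy l) (R l) \<and>
     comp C (S b) (Bx b) = comp C (By l) (R (Suc l)) \<and>
     (\<forall>j. a \<le> j \<longrightarrow> j < b \<longrightarrow> comp C (S j) (Bx j) = comp C (S (Suc j)) (Fx (Suc j)))"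
    show "\<forall>j<n. fs j = l \<longrightarrow> (0<j \<longrightarrow> fs (j-1) \<noteq> l) \<longrightarrow> comp C (S j) (Fx j) = comp C (Fy l) (R l)"
    proof (intro allI impI)
      fix j assume "j < n" "fs j = l" "0<j \<longrightarrow> fs (j-1) \<noteq> l"
      then have "j = a" using FA[of j] by simp
      then show "comp C (S j) (Fx j) = comp C (Fy l) (R l)" using h by simp
    qed
    show "\<forall>j<n. fs j = l \<longrightarrow> (Suc j < n \<longrightarrow> fs (Suc j) \<noteq> l) \<longrightarrow> comp C (S j) (Bx j) = comp C (By l) (R (Suc l))"
    proof (intro allI impI)
      fix j assume "j < n" "fs j = l" "Suc j < n \<longrightarrow> fs (Suc j) \<noteq> l"
      then have "j = b" using FB[of j] by simp
      then show "comp C (S j) (Bx j) = comp C (By l) (R (Suc l))" using h by simp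
    qed
    show "\<forall>j. Suc j < n \<longrightarrow> fs j = l \<longrightarrow> fs (Suc j) = l \<longrightarrow> comp C (S j) (Bx j) = comp C (S (Suc j)) (Fx (Suc j))"
    proof (intro allI impI)
      fix j assume "Suc j < n" "fs j = l" "fs (Suc j) = l"
      then have "a \<le> j" "j < b" using FC[of j] by auto
      then show "comp C (S j) (Bx j) = comp C (S (Suc j)) (Fx (Suc j))" using h by simp
    qed
    show "(\<forall>j<n. fs j \<noteq> l) \<longrightarrow> comp C (Fy l) (R l) = comp C (By l) (R (Suc l))"
      using an by auto
  qed
  then show ?thesis using False a_def b_def by simp
qed

lemma zmap_locD:
  assumes "is_zmap C X Y f" "l < zlen Y"
  shows "loc C (zlen X) (smap f) (ssl f) (zf X) (zb X) (zf Y) (zb Y) (rsl f) l"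
proof -
  have d: "is_dmap (zlen X) (zlen Y) (smap f)" using assms unfolding is_zmap_def Let_def by auto
  have "(let P = {j. j < zlen X \<and> smap f j = l} in
         (if P \<noteq> {} then
            comp C (ssl f (Min P)) (zf X (Min P)) = comp C (zf Y l) (rsl f l) \<and>
            comp C (ssl f (Max P)) (zb X (Max P)) = comp C (zb Y l) (rsl f (Suc l)) \<and>
            (\<forall>j. Min P \<le> j \<longrightarrow> j < Max P \<longrightarrow>
                 comp C (ssl f j) (zb X j) = comp C (ssl f (Suc j)) (zf X (Suc j)))
          else comp C (zf Y l) (rsl f l) = comp C (zb Y l) (rsl f (Suc l))))"
    using assms unfolding is_zmap_def by (auto simp only: Let_def)
  then show ?thesis unfolding Let_def
    by (subst (asm) loc_iff[OF d refl])
qed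

lemma zmap_locI:
  assumes "is_dmap (zlen X) (zlen Y) (smap f)"
    "\<forall>i\<le>zlen Y. is_hom C (rsl f i) (zr X (hat (zlen X) (smap f) i)) (zr Y i)"
    "\<forall>j<zlen X. is_hom C (ssl f j) (zs X j) (zs Y (smap f j))"
    "\<forall>i>zlen Y. rsl f i = undefined" "\<forall>j\<ge>zlen X. ssl f j = undefined"
    "\<forall>l<zlen Y. loc C (zlen X) (smap f) (ssl f) (zf X) (zb X) (zf Y) (zb Y) (rsl f) l"
  shows "is_zmap C X Y f"
proof -
  have m: "\<And>j k. j \<le> k \<Longrightarrow> k < zlen X \<Longrightarrow> smap f j \<le> smap f k" using assms(1) by (auto simp: is_dmap_def)
  have L: "(if {j. j < zlen X \<and> smap f j = l} \<noteq> {} then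
            comp C (ssl f (Min {j. j < zlen X \<and> smap f j = l})) (zf X (Min {j. j < zlen X \<and> smap f j = l})) = comp C (zf Y l) (rsl f l) \<and>
            comp C (ssl f (Max {j. j < zlen X \<and> smap f j = l})) (zb X (Max {j. j < zlen X \<and> smap f j = l})) = comp C (zb Y l) (rsl f (Suc l)) \<and>
            (\<forall>j. Min {j. j < zlen X \<and> smap f j = l} \<le> j \<longrightarrow> j < Max {j. j < zlen X \<and> smap f j = l} \<longrightarrow>
                 comp C (ssl f j) (zb X j) = comp C (ssl f (Suc j)) (zf X (Suc j)))
          else comp C (zf Y l) (rsl f l) = comp C (zb Y l) (rsl f (Suc l)))"
   if "l < zlen Y" for l
    apply (subst loc_iff[OF assms(1) refl, where l=l]) apply (rule assms(6)[rule_format, OF that]) done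
  show ?thesis unfolding is_zmap_def Let_def using assms(1-5) L by blast
qed

lemma loc_mono:
  assumes e: "\<And>j. j < n \<Longrightarrow> fs j = gs j" and L: "loc C n fs S Fx Bx Fy By R l"
  shows "loc C n gs S Fx Bx Fy By R l"
proof -
  note c = L[unfolded loc_def]
  note c1 = c[THEN conjunct1, rule_format]
  note c2 = c[THEN conjunct2, THEN conjunct1, rule_format]
  note c3 = c[THEN conjunct2, THEN conjunct2, THEN conjunct1, rule_format]
  note c4 = c[THEN conjunct2, THEN conjunct2, THEN conjunct2, rule_format]
  show ?thesis unfolding loc_def
  proof (intro conjI allI impI)
    fix j assume j: "j < n" "gs j = l" "0 < j \<longrightarrow> gs (j - 1) \<noteq> l"
    have "fs j = l" using e j by simp
    moreover have "0 < j \<longrightarrow> fs (j - 1) \<noteq> l" using e[of "j - 1"] j by simp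
    ultimately show "comp C (S j) (Fx j) = comp C (Fy l) (R l)" using c1 j(1) by blast
  next
    fix j assume j: "j < n" "gs j = l" "Suc j < n \<longrightarrow> gs (Suc j) \<noteq> l"
    have "fs j = l" using e j by simp
    moreover have "Suc j < n \<longrightarrow> fs (Suc j) \<noteq> l" using e[of "Suc j"] j by simp
    ultimately show "comp C (S j) (Bx j) = comp C (By l) (R (Suc l))" using c2 j(1) by blast
  next
    fix j assume j: "Suc j < n" "gs j = l" "gs (Suc j) = l"
    have "fs j = l" "fs (Suc j) = l" using e[of j] e[of "Suc j"] j by auto
    then show "comp C (S j) (Bx j) = comp C (S (Suc j)) (Fx (Suc j))" using c3 j(1) by blast
  next
    assume j: "\<forall>j<n. gs j \<noteq> l"
    have "\<forall>j<n. fs j \<noteq> l" using e j by simp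
    then show "comp C (Fy l) (R l) = comp C (By l) (R (Suc l))" using c4 by blast
  qed
qed

lemma face_lt[simp]: "j < n \<Longrightarrow> face n i j = (if j < i then j else Suc j)"
  by (simp add: face_def)

lemma cat_idR: "is_category C \<Longrightarrow> is_hom C f a b \<Longrightarrow> comp C f (idm C a) = f"
  unfolding is_category_def is_hom_def by auto
lemma cat_idL: "is_category C \<Longrightarrow> is_hom C f a b \<Longrightarrow> comp C (idm C b) f = f"
  unfolding is_category_def is_hom_def by auto
lemma cat_id_hom: "is_category C \<Longrightarrow> a \<in> Obj C \<Longrightarrow> is_hom C (idm C a) a a"
  unfolding is_category_def is_hom_def by auto
lemma cat_comp_hom: "is_category C \<Longrightarrow> is_hom C g b c \<Longrightarrow> is_hom C f a b \<Longrightarrow> is_hom C (comp C g f) a c"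
  unfolding is_category_def is_hom_def by auto
lemma hom_obj: "is_category C \<Longrightarrow> is_hom C f a b \<Longrightarrow> a \<in> Obj C \<and> b \<in> Obj C"
  unfolding is_category_def is_hom_def by auto


lemma part1:
  fixes C :: "('o, 'm) category" and A :: "('o, 'm) zigzag" and i :: nat
  assumes cat: "is_category C" and zA: "is_zigzag C A" and i: "i \<le> zlen A"
  shows "is_zmap C A (insert_id C A i) (insert_map C A i)"
proof -
  define n where "n = zlen A"
  define A' where "A' = insert_id C A i"
  define f where "f = insert_map C A i"
  have lA': "zlen A' = Suc n" by (simp add: A'_def insert_id_def n_def)
  have rA': "zr A' j = (if j \<le> i then zr A j else zr A (j - 1))" for j by (simp add: A'_def insert_id_def)
  have sA': "zs A' j = (if j < i then zs A j else if j = i then zr A i else zs A (j - 1))" for j by (simp add: A'_def insert_id_def)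
  have fA': "zf A' j = (if j < i then zf A j else if j = i then idm C (zr A i) else zf A (j - 1))" for j by (simp add: A'_def insert_id_def)
  have bA': "zb A' j = (if j < i then zb A j else if j = i then idm C (zr A i) else zb A (j - 1))" for j by (simp add: A'_def insert_id_def)
  have sf: "smap f = face n i" by (simp add: f_def insert_map_def n_def)
  have rf: "rsl f k = (if k \<le> Suc n then idm C (zr A' k) else undefined)" for k by (simp add: f_def insert_map_def n_def A'_def)
  have ssf: "ssl f j = (if j < n then idm C (zs A j) else undefined)" for j by (simp add: f_def insert_map_def n_def)
  have in_: "i \<le> n" using i n_def by simp
  have zr_obj: "k \<le> n \<Longrightarrow> zr A k \<in> Obj C" for k using zA n_def by (simp add: is_zigzag_def)
  have zs_obj: "j < n \<Longrightarrow> zs A j \<in> Obj C" for j using zA n_def by (simp add: is_zigzag_def)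
  have hf: "j < n \<Longrightarrow> is_hom C (zf A j) (zr A j) (zs A j)" for j using zA n_def by (simp add: is_zigzag_def)
  have hb: "j < n \<Longrightarrow> is_hom C (zb A j) (zr A (Suc j)) (zs A j)" for j using zA n_def by (simp add: is_zigzag_def)
  have "is_zmap C A A' f"
  proof (rule zmap_locI)
    show "is_dmap (zlen A) (zlen A') (smap f)"
      unfolding sf lA' n_def[symmetric] is_dmap_def by (auto simp: face_def)
    show "\<forall>k\<le>zlen A'. is_hom C (rsl f k) (zr A (hat (zlen A) (smap f) k)) (zr A' k)"
    proof (intro allI impI)
      fix k assume k: "k \<le> zlen A'"
      have "zr A (hat (zlen A) (smap f) k) = zr A' k"
        using hat_face[OF in_, of k] k lA' sf rA' n_def by simp
      moreover have "zr A' k \<in> Obj C" using rA' zr_obj k lA' in_ by auto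
      ultimately show "is_hom C (rsl f k) (zr A (hat (zlen A) (smap f) k)) (zr A' k)"
        using rf k lA' cat_id_hom[OF cat] by simp
    qed
    show "\<forall>j<zlen A. is_hom C (ssl f j) (zs A j) (zs A' (smap f j))"
      using ssf sA' sf n_def cat_id_hom[OF cat] zs_obj by auto
    show "\<forall>k>zlen A'. rsl f k = undefined" using rf lA' by simp
    show "\<forall>j\<ge>zlen A. ssl f j = undefined" using ssf n_def by simp
    show "\<forall>l<zlen A'. loc C (zlen A) (smap f) (ssl f) (zf A) (zb A) (zf A') (zb A') (rsl f) l"
    proof (intro allI impI)
      fix l assume l: "l < zlen A'"
      show "loc C (zlen A) (smap f) (ssl f) (zf A) (zb A) (zf A') (zb A') (rsl f) l"
        unfolding loc_def n_def[symmetric] sf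
      proof (intro conjI allI impI)
        fix j assume j: "j < n" "face n i j = l"
        show "comp C (ssl f j) (zf A j) = comp C (zf A' l) (rsl f l)"
          using j l lA' ssf rf fA' rA' cat_idL[OF cat hf[OF j(1)]] cat_idR[OF cat hf[OF j(1)]]
          by (auto split: if_splits)
        show "comp C (ssl f j) (zb A j) = comp C (zb A' l) (rsl f (Suc l))"
          using j l lA' ssf rf bA' rA' cat_idL[OF cat hb[OF j(1)]] cat_idR[OF cat hb[OF j(1)]]
          by (auto split: if_splits)
      next
        fix j assume "Suc j < n" "face n i j = l" "face n i (Suc j) = l"
        then show "comp C (ssl f j) (zb A j) = comp C (ssl f (Suc j)) (zf A (Suc j))"
          by (auto split: if_splits)
      next
        assume nl: "\<forall>j<n. face n i j \<noteq> l"
        have "l = i"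
        proof (rule ccontr)
          assume "l \<noteq> i"
          then show False
          proof (cases "l < i")
            case True then show False using nl[rule_format, of l] in_ by auto
          next
            case False
            then have "l - 1 < n" "face n i (l - 1) = l" using \<open>l \<noteq> i\<close> l lA' by auto
            then show False using nl by auto
          qed
        qed
        have ob: "zr A i \<in> Obj C" using zr_obj in_ by simp
        show "comp C (zf A' l) (rsl f l) = comp C (zb A' l) (rsl f (Suc l))"
          using \<open>l = i\<close> fA' bA' rf rA' in_ cat_idL[OF cat cat_id_hom[OF cat ob]] by simp
      qed
    qed
  qed
  then show ?thesis by (simp add: A'_def f_def)
qed


lemma part2:
  fixes C :: "('o, 'm) category" and A :: "('o, 'm) zigzag" and i :: nat
  assumes cat: "is_category C" and zA: "is_zigzag C A" and i: "i \<le> zlen A"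
  shows "pi_cocartesian C A (insert_id C A i) (insert_map C A i)"
  unfolding pi_cocartesian_def
proof (intro allI impI)
  define n where "n = zlen A"
  define A' where "A' = insert_id C A i"
  define f where "f = insert_map C A i"
  have lA': "zlen A' = Suc n" by (simp add: A'_def insert_id_def n_def)
  have rA': "zr A' j = (if j \<le> i then zr A j else zr A (j - 1))" for j by (simp add: A'_def insert_id_def)
  have sA': "zs A' j = (if j < i then zs A j else if j = i then zr A i else zs A (j - 1))" for j by (simp add: A'_def insert_id_def)
  have fA': "zf A' j = (if j < i then zf A j else if j = i then idm C (zr A i) else zf A (j - 1))" for j by (simp add: A'_def insert_id_def)
  have bA': "zb A' j = (if j < i then zb A j else if j = i then idm C (zr A i) else zb A (j - 1))" for j by (simp add: A'_def insert_id_def)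
  have sf: "smap f = face n i" by (simp add: f_def insert_map_def n_def)
  have rf: "rsl f k = (if k \<le> Suc n then idm C (zr A' k) else undefined)" for k by (simp add: f_def insert_map_def n_def A'_def)
  have ssf: "ssl f j = (if j < n then idm C (zs A j) else undefined)" for j by (simp add: f_def insert_map_def n_def)
  have in_: "i \<le> n" using i n_def by simp
  have zr_obj: "k \<le> n \<Longrightarrow> zr A k \<in> Obj C" for k using zA n_def by (simp add: is_zigzag_def)
  have zs_obj: "j < n \<Longrightarrow> zs A j \<in> Obj C" for j using zA n_def by (simp add: is_zigzag_def)
  have hf: "j < n \<Longrightarrow> is_hom C (zf A j) (zr A j) (zs A j)" for j using zA n_def by (simp add: is_zigzag_def)
  have hb: "j < n \<Longrightarrow> is_hom C (zb A j) (zr A (Suc j)) (zs A j)" for j using zA n_def by (simp add: is_zigzag_def)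

  fix Y' h u
  assume zY: "is_zigzag C Y'" and hz: "is_zmap C A Y' h"
    and ud0: "is_dmap (zlen (insert_id C A i)) (zlen Y') u"
    and hu0: "\<forall>j<zlen A. u (smap (insert_map C A i) j) = smap h j"
  define m where "m = zlen Y'"
  have ud: "is_dmap (Suc n) m u" using ud0 lA' A'_def m_def by simp
  have um: "\<And>j k. j \<le> k \<Longrightarrow> k < Suc n \<Longrightarrow> u j \<le> u k" using ud by (auto simp: is_dmap_def)
  have ulm: "j < Suc n \<Longrightarrow> u j < m" for j using ud by (auto simp: is_dmap_def)
  have uund: "j \<ge> Suc n \<Longrightarrow> u j = undefined" for j using ud by (auto simp: is_dmap_def)
  have hu: "j < n \<Longrightarrow> smap h j = u (face n i j)" for j using hu0 sf f_def n_def by simp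
  have hd: "is_dmap n m (smap h)" using hz n_def m_def unfolding is_zmap_def Let_def by simp
  have rtyp: "k \<le> m \<Longrightarrow> is_hom C (rsl h k) (zr A (hat n (smap h) k)) (zr Y' k)" for k
    using hz n_def m_def unfolding is_zmap_def Let_def by simp
  have styp: "j < n \<Longrightarrow> is_hom C (ssl h j) (zs A j) (zs Y' (smap h j))" for j
    using hz n_def m_def unfolding is_zmap_def Let_def by simp
  have rund: "k > m \<Longrightarrow> rsl h k = undefined" for k
    using hz n_def m_def unfolding is_zmap_def Let_def by simp
  have sund: "j \<ge> n \<Longrightarrow> ssl h j = undefined" for j
    using hz n_def m_def unfolding is_zmap_def Let_def by simp
  have hl: "loc C n (\<lambda>j. u (face n i j)) (ssl h) (zf A) (zb A) (zf Y') (zb Y') (rsl h) l" if "l < m" for l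
  proof -
    have "loc C n (smap h) (ssl h) (zf A) (zb A) (zf Y') (zb Y') (rsl h) l"
      using zmap_locD[OF hz] that n_def m_def by simp
    then show ?thesis by (rule loc_mono[rotated]) (simp add: hu)
  qed
  have HZ: "zr A (hat n (smap h) k) = zr A' (hat (Suc n) u k)" for k
  proof -
    have "hat n (smap h) k = hat n (\<lambda>j. u (face n i j)) k" by (rule hat_cong) (simp add: hu)
    also have "\<dots> = (if hat (Suc n) u k \<le> i then hat (Suc n) u k else hat (Suc n) u k - 1)"
      by (rule hat_comp_face[OF in_ um])
    finally show ?thesis using rA' by simp
  qed
  define \<sigma> where "\<sigma> = (if 0 < i \<and> u (i - 1) = u i then comp C (ssl h (i - 1)) (zb A (i - 1))
                        else comp C (zf Y' (u i)) (rsl h (u i)))"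
  have \<sigma>T: "0 < i \<and> u (i - 1) = u i \<Longrightarrow> \<sigma> = comp C (ssl h (i - 1)) (zb A (i - 1))" using \<sigma>_def by simp
  have \<sigma>F: "\<not> (0 < i \<and> u (i - 1) = u i) \<Longrightarrow> \<sigma> = comp C (zf Y' (u i)) (rsl h (u i))" using \<sigma>_def by meson
  define v :: "'m zmap" where "v = \<lparr> smap = u, rsl = rsl h,
      ssl = (\<lambda>j. if j < i then ssl h j else if j = i then \<sigma> else if j < Suc n then ssl h (j - 1) else undefined) \<rparr>"
  have \<sigma>hom: "is_hom C \<sigma> (zr A i) (zs Y' (u i))"
  proof (cases "0 < i \<and> u (i - 1) = u i")
    case True
    have i1: "i - 1 < n" using True in_ by auto
    then have "is_hom C (ssl h (i - 1)) (zs A (i - 1)) (zs Y' (u i))" using styp[of "i - 1"] hu[of "i - 1"] True by simp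
    moreover have "is_hom C (zb A (i - 1)) (zr A i) (zs A (i - 1))" using hb[OF i1] True by simp
    ultimately show ?thesis using True \<sigma>_def cat_comp_hom[OF cat] by simp
  next
    case False
    have "hat (Suc n) u (u i) = i"
    proof (rule hat_eqI)
      show "i \<le> Suc n" using in_ by simp
      show "u i \<le> u i" by simp
      fix j assume "j < i"
      then have "u j \<le> u (i - 1)" "u (i - 1) \<le> u i" using um[of j "i - 1"] um[of "i - 1" i] in_ by auto
      then show "u j < u i" using False \<open>j < i\<close> by auto
    qed
    then have "zr A (hat n (smap h) (u i)) = zr A i" using HZ rA' by simp
    then have "is_hom C (rsl h (u i)) (zr A i) (zr Y' (u i))" using rtyp[of "u i"] ulm[of i] in_ by simp
    moreover have "is_hom C (zf Y' (u i)) (zr Y' (u i)) (zs Y' (u i))" using zY ulm[of i] in_ m_def by (simp add: is_zigzag_def)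
    moreover have "\<sigma> = comp C (zf Y' (u i)) (rsl h (u i))" using False \<sigma>_def by meson
    ultimately show ?thesis using cat_comp_hom[OF cat] by simp
  qed
  have sv: "ssl v j = (if j < i then ssl h j else if j = i then \<sigma> else if j < Suc n then ssl h (j - 1) else undefined)" for j
    by (simp add: v_def)
  have vz: "is_zmap C A' Y' v"
  proof (rule zmap_locI)
    show "is_dmap (zlen A') (zlen Y') (smap v)" using ud lA' m_def v_def by simp
    show "\<forall>k\<le>zlen Y'. is_hom C (rsl v k) (zr A' (hat (zlen A') (smap v) k)) (zr Y' k)"
      using rtyp HZ lA' m_def v_def by simp
    show "\<forall>j<zlen A'. is_hom C (ssl v j) (zs A' j) (zs Y' (smap v j))"
    proof (intro allI impI)
      fix j assume j: "j < zlen A'"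
      show "is_hom C (ssl v j) (zs A' j) (zs Y' (smap v j))"
      proof (cases "j < i")
        case True then show ?thesis using styp[of j] hu[of j] sv sA' in_ v_def by simp
      next
        case False
        show ?thesis
        proof (cases "j = i")
          case True then show ?thesis using \<sigma>hom sv sA' v_def by simp
        next
          case False
          then have "j - 1 < n" "face n i (j - 1) = j" using \<open>\<not> j < i\<close> j lA' by auto
          then show ?thesis using styp[of "j - 1"] hu[of "j - 1"] sv sA' v_def False \<open>\<not> j < i\<close> j lA' by simp
        qed
      qed
    qed
    show "\<forall>k>zlen Y'. rsl v k = undefined" using rund m_def v_def by simp
    show "\<forall>j\<ge>zlen A'. ssl v j = undefined" using sv lA' in_ by simp
    show "\<forall>l<zlen Y'. loc C (zlen A') (smap v) (ssl v) (zf A') (zb A') (zf Y') (zb Y') (rsl v) l"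
    proof (intro allI impI)
      fix l assume l: "l < zlen Y'"
      have HL: "loc C n (\<lambda>j. u (face n i j)) (ssl h) (zf A) (zb A) (zf Y') (zb Y') (rsl h) l"
        using hl l m_def by simp
      note HL1 = HL[unfolded loc_def, THEN conjunct1, rule_format]
      note HL2 = HL[unfolded loc_def, THEN conjunct2, THEN conjunct1, rule_format]
      note HL3 = HL[unfolded loc_def, THEN conjunct2, THEN conjunct2, THEN conjunct1, rule_format]
      note HL4 = HL[unfolded loc_def, THEN conjunct2, THEN conjunct2, THEN conjunct2, rule_format]
      have \<sigma>id: "comp C \<sigma> (idm C (zr A i)) = \<sigma>" using cat_idR[OF cat \<sigma>hom] .
      show "loc C (zlen A') (smap v) (ssl v) (zf A') (zb A') (zf Y') (zb Y') (rsl v) l"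
        unfolding loc_def lA'
      proof (intro conjI allI impI)
        fix j assume j: "j < Suc n" "smap v j = l" "0 < j \<longrightarrow> smap v (j - 1) \<noteq> l"
        have uj: "u j = l" "0 < j \<longrightarrow> u (j - 1) \<noteq> l" using j v_def by auto
        show "comp C (ssl v j) (zf A' j) = comp C (zf Y' l) (rsl v l)"
        proof (cases "j < i")
          case True
          have "comp C (ssl h j) (zf A j) = comp C (zf Y' l) (rsl h l)"
            by (rule HL1) (use uj True in_ in auto)
          then show ?thesis using True sv fA' v_def by simp
        next
          case False
          show ?thesis
          proof (cases "j = i")
            case True
            then have "\<sigma> = comp C (zf Y' l) (rsl h l)" using uj \<sigma>_def by auto
            then show ?thesis using True sv fA' v_def \<sigma>id by simp
          next
            case False
            have g: "u (face n i (j - 1 - 1)) \<noteq> l" if "0 < j - 1"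
            proof (cases "j - 1 - 1 < i")
              case True
              then have "j = Suc i" using \<open>\<not> j < i\<close> False by auto
              then have "u (i - 1) \<le> u i" "u i \<le> u j" "u i \<noteq> l" using um[of "i - 1" i] um[of i j] uj j that by auto
              then show ?thesis using True \<open>j = Suc i\<close> in_ uj by auto
            next
              case False
              moreover have "Suc (j - 1 - 1) = j - 1" using that by simp
              moreover have "j - 1 - 1 < n" using that j by simp
              ultimately show ?thesis using uj that by simp
            qed
            have "comp C (ssl h (j - 1)) (zf A (j - 1)) = comp C (zf Y' l) (rsl h l)"
              by (rule HL1) (use uj False \<open>\<not> j < i\<close> j g in auto)
            then show ?thesis using False \<open>\<not> j < i\<close> sv fA' v_def j by simp
          qed
        qed
      next
        fix j assume j: "j < Suc n" "smap v j = l" "Suc j < Suc n \<longrightarrow> smap v (Suc j) \<noteq> l"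
        have uj: "u j = l" "Suc j < Suc n \<longrightarrow> u (Suc j) \<noteq> l" using j v_def by auto
        show "comp C (ssl v j) (zb A' j) = comp C (zb Y' l) (rsl v (Suc l))"
        proof (cases "j < i")
          case True
          have g: "u (face n i (Suc j)) \<noteq> l" if "Suc j < n"
          proof (cases "Suc j < i")
            case True then show ?thesis using uj that by auto
          next
            case False
            then have "Suc j = i" using \<open>j < i\<close> by auto
            then have "u j \<le> u i" "u i \<le> u (Suc i)" using um[of j i] um[of i "Suc i"] that by auto
            then show ?thesis using \<open>Suc j = i\<close> uj that by auto
          qed
          have "comp C (ssl h j) (zb A j) = comp C (zb Y' l) (rsl h (Suc l))"
            by (rule HL2) (use uj True in_ g in auto)
          then show ?thesis using True sv bA' v_def by simp
        next
          case False
          show ?thesis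
          proof (cases "j = i")
            case True
            have "\<sigma> = comp C (zb Y' l) (rsl h (Suc l))"
            proof (cases "0 < i \<and> u (i - 1) = u i")
              case c: True
              have "comp C (ssl h (i - 1)) (zb A (i - 1)) = comp C (zb Y' l) (rsl h (Suc l))"
                by (rule HL2) (use c uj True in_ in auto)
              then show ?thesis using c \<sigma>T by simp
            next
              case c: False
              have "comp C (zf Y' l) (rsl h l) = comp C (zb Y' l) (rsl h (Suc l))"
              proof (rule HL4)
                fix k assume k: "k < n"
                show "u (face n i k) \<noteq> l"
                proof (cases "k < i")
                  case True
                  then have "u k \<le> u (i - 1)" "u (i - 1) \<le> u i" using um[of k "i - 1"] um[of "i - 1" i] in_ by auto
                  then show ?thesis using True c uj \<open>j = i\<close> k by auto
                next
                  case False
                  then have "u i \<le> u (Suc i)" "u (Suc i) \<le> u (Suc k)" using um[of i "Suc i"] um[of "Suc i" "Suc k"] k by auto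
                  then show ?thesis using False uj \<open>j = i\<close> k by auto
                qed
              qed
              then show ?thesis using c \<sigma>F uj True by simp
            qed
            then show ?thesis using True sv bA' v_def \<sigma>id by simp
          next
            case False
            have "comp C (ssl h (j - 1)) (zb A (j - 1)) = comp C (zb Y' l) (rsl h (Suc l))"
              by (rule HL2) (use uj False \<open>\<not> j < i\<close> j in auto)
            then show ?thesis using False \<open>\<not> j < i\<close> sv bA' v_def j by simp
          qed
        qed
      next
        fix j assume j: "Suc j < Suc n" "smap v j = l" "smap v (Suc j) = l"
        have uj: "u j = l" "u (Suc j) = l" using j v_def by auto
        show "comp C (ssl v j) (zb A' j) = comp C (ssl v (Suc j)) (zf A' (Suc j))"
        proof (cases "Suc j < i")
          case True
          have "comp C (ssl h j) (zb A j) = comp C (ssl h (Suc j)) (zf A (Suc j))"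
            by (rule HL3) (use uj True in_ in auto)
          then show ?thesis using True sv bA' fA' v_def by simp
        next
          case False
          show ?thesis
          proof (cases "Suc j = i")
            case True
            then have "\<sigma> = comp C (ssl h j) (zb A j)" using uj \<sigma>_def by auto
            then show ?thesis using True sv bA' fA' v_def \<sigma>id by simp
          next
            case F2: False
            show ?thesis
            proof (cases "j = i")
              case True
              have "\<sigma> = comp C (ssl h i) (zf A i)"
              proof (cases "0 < i \<and> u (i - 1) = u i")
                case c: True
                have "comp C (ssl h (i - 1)) (zb A (i - 1)) = comp C (ssl h (Suc (i - 1))) (zf A (Suc (i - 1)))"
                  by (rule HL3) (use c uj True j in auto)
                then show ?thesis using c \<sigma>T by simp
              next
                case c: False
                have "comp C (ssl h i) (zf A i) = comp C (zf Y' l) (rsl h l)"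
                  by (rule HL1) (use c uj True j in auto)
                then show ?thesis using c \<sigma>F uj True by simp
              qed
              then show ?thesis using True sv bA' fA' v_def \<sigma>id j by simp
            next
              case False
              have "comp C (ssl h (j - 1)) (zb A (j - 1)) = comp C (ssl h (Suc (j - 1))) (zf A (Suc (j - 1)))"
                by (rule HL3) (use uj False F2 \<open>\<not> Suc j < i\<close> j in auto)
              then show ?thesis using False F2 \<open>\<not> Suc j < i\<close> sv bA' fA' v_def j by simp
            qed
          qed
        qed
      next
        assume j: "\<forall>j<Suc n. smap v j \<noteq> l"
        have "comp C (zf Y' l) (rsl h l) = comp C (zb Y' l) (rsl h (Suc l))"
        proof (rule HL4)
          fix k assume "k < n" 
          then show "u (face n i k) \<noteq> l" using j v_def by simp
        qed
        then show "comp C (zf Y' l) (rsl v l) = comp C (zb Y' l) (rsl v (Suc l))" using v_def by simp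
      qed
    qed
  qed
  have hatle: "hat (Suc n) u k \<le> Suc n" for k using hat_props(1) .
  have rdom: "k \<le> m \<Longrightarrow> comp C (rsl h k) (idm C (zr A' (hat (Suc n) u k))) = rsl h k" for k
    using cat_idR[OF cat, of "rsl h k"] rtyp[of k] HZ[of k] by simp
  have cv: "zcomp C A A' Y' v f = h"
  proof (rule zmap.equality)
    show "smap (zcomp C A A' Y' v f) = smap h"
    proof
      fix j show "smap (zcomp C A A' Y' v f) j = smap h j"
        using hu[of j] sund sf v_def hd n_def by (auto simp: zcomp_def is_dmap_def)
    qed
    show "rsl (zcomp C A A' Y' v f) = rsl h"
    proof
      fix k show "rsl (zcomp C A A' Y' v f) k = rsl h k"
        using rdom[of k] rund[of k] rf hatle lA' v_def m_def by (auto simp: zcomp_def)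
    qed
    show "ssl (zcomp C A A' Y' v f) = ssl h"
    proof
      fix j show "ssl (zcomp C A A' Y' v f) j = ssl h j"
      proof (cases "j < n")
        case True
        have t: "is_hom C (ssl h j) (zs A j) (zs Y' (smap h j))" using styp True .
        have "ssl v (face n i j) = ssl h j" using True sv by auto
        then show ?thesis using True cat_idR[OF cat t] ssf sf v_def n_def by (simp add: zcomp_def)
      next
        case False then show ?thesis using sund n_def by (simp add: zcomp_def)
      qed
    qed
    show "zmap.more (zcomp C A A' Y' v f) = zmap.more h" by simp
  qed
  have uniq: "w = v" if wz: "is_zmap C A' Y' w" and ws: "smap w = u" and wc: "zcomp C A A' Y' w f = h" for w
  proof -
    have wd: "is_dmap (Suc n) m (smap w)" using wz lA' m_def unfolding is_zmap_def Let_def by simp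
    have wrt: "k \<le> m \<Longrightarrow> is_hom C (rsl w k) (zr A' (hat (Suc n) u k)) (zr Y' k)" for k
      using wz lA' m_def ws unfolding is_zmap_def Let_def by simp
    have wst: "j < Suc n \<Longrightarrow> is_hom C (ssl w j) (zs A' j) (zs Y' (u j))" for j
      using wz lA' m_def ws unfolding is_zmap_def Let_def by simp
    have wru: "k > m \<Longrightarrow> rsl w k = undefined" for k
      using wz lA' m_def unfolding is_zmap_def Let_def by simp
    have wsu: "j \<ge> Suc n \<Longrightarrow> ssl w j = undefined" for j
      using wz lA' m_def unfolding is_zmap_def Let_def by simp
    have wr: "rsl w k = rsl h k" for k
    proof (cases "k \<le> m")
      case True
      have "rsl h k = rsl (zcomp C A A' Y' w f) k" using wc by simp
      also have "\<dots> = comp C (rsl w k) (idm C (zr A' (hat (Suc n) u k)))"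
        using True rf hatle lA' ws m_def by (simp add: zcomp_def)
      also have "\<dots> = rsl w k" using cat_idR[OF cat wrt[OF True]] .
      finally show ?thesis by simp
    next
      case False then show ?thesis using wru rund by simp
    qed
    have wsh: "ssl w (face n i j) = ssl h j" if j: "j < n" for j
    proof -
      have fj: "face n i j < Suc n" using j by simp
      have zs: "zs A' (face n i j) = zs A j" using j sA' by auto
      have "ssl h j = ssl (zcomp C A A' Y' w f) j" using wc by simp
      also have "\<dots> = comp C (ssl w (face n i j)) (idm C (zs A j))"
        using j ssf sf ws n_def by (simp add: zcomp_def)
      also have "\<dots> = ssl w (face n i j)" using cat_idR[OF cat wst[OF fj]] zs by simp
      finally show ?thesis by simp
    qed
    have wss: "ssl w j = ssl v j" for j
    proof (cases "j < Suc n")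
      case False then show ?thesis using wsu sv in_ by simp
    next
      case jn: True
      show ?thesis
      proof (cases "j < i")
        case True then show ?thesis using wsh[of j] in_ sv by simp
      next
        case F1: False
        show ?thesis
        proof (cases "j = i")
          case False
          then have "j - 1 < n" "face n i (j - 1) = j" using F1 jn by auto
          then show ?thesis using wsh[of "j - 1"] sv F1 False jn by simp
        next
          case True
          have lm: "u i < m" using ulm in_ by simp
          have WL: "loc C (Suc n) u (ssl w) (zf A') (zb A') (zf Y') (zb Y') (rsl w) (u i)"
            using zmap_locD[OF wz] lA' m_def ws lm by simp
          note W1 = WL[unfolded loc_def, THEN conjunct1, rule_format]
          note W3 = WL[unfolded loc_def, THEN conjunct2, THEN conjunct2, THEN conjunct1, rule_format]
          have wid: "comp C (ssl w i) (idm C (zr A i)) = ssl w i"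
            using cat_idR[OF cat wst[of i]] in_ sA' by simp
          have "ssl w i = \<sigma>"
          proof (cases "0 < i \<and> u (i - 1) = u i")
            case c: True
            have "comp C (ssl w (i - 1)) (zb A' (i - 1)) = comp C (ssl w (Suc (i - 1))) (zf A' (Suc (i - 1)))"
            proof (rule W3)
              have si: "Suc (i - 1) = i" using c by simp
              show "Suc (i - 1) < Suc n" using si in_ by simp
              show "u (i - 1) = u i" using c by simp
              show "u (Suc (i - 1)) = u i" using si by simp
            qed
            moreover have "ssl w (i - 1) = ssl h (i - 1)"
            proof -
              have i1: "i - 1 < n" using c in_ by linarith
              have "face n i (i - 1) = i - 1" using c i1 by simp
              then show ?thesis using wsh[OF i1] by simp
            qed
            ultimately show ?thesis using c \<sigma>T bA' fA' wid by simp
          next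
            case c: False
            have "comp C (ssl w i) (zf A' i) = comp C (zf Y' (u i)) (rsl w (u i))"
            proof (rule W1)
              show "i < Suc n" using in_ by simp
              show "u i = u i" by simp
              show "u (i - 1) \<noteq> u i" if "0 < i" using c that by blast
            qed
            then show ?thesis using c \<sigma>F fA' wid wr by simp
          qed
          then show ?thesis using True sv by simp
        qed
      qed
    qed
    show "w = v"
    proof (rule zmap.equality)
      show "smap w = smap v" using ws v_def by simp
      show "rsl w = rsl v" using wr v_def by auto
      show "ssl w = ssl v" using wss by auto
      show "zmap.more w = zmap.more v" by simp
    qed
  qed
  have "\<exists>!v. is_zmap C A' Y' v \<and> smap v = u \<and> zcomp C A A' Y' v f = h"
  proof (rule ex1I[of _ v])
    show "is_zmap C A' Y' v \<and> smap v = u \<and> zcomp C A A' Y' v f = h" using vz cv by (simp add: v_def)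
  next
    fix w assume "is_zmap C A' Y' w \<and> smap w = u \<and> zcomp C A A' Y' w f = h"
    then show "w = v" using uniq by blast
  qed
  then show "\<exists>!v. is_zmap C (insert_id C A i) Y' v \<and> smap v = u \<and> zcomp C A (insert_id C A i) Y' v (insert_map C A i) = h"
    using A'_def f_def by simp
qed


theorem lemma3p2:
  fixes C :: "('o, 'm) category" and A :: "('o, 'm) zigzag" and i :: nat
  assumes "is_category C"
    and "is_zigzag C A"
    and "i \<le> zlen A"
  shows "is_zmap C A (insert_id C A i) (insert_map C A i)
         \<and> pi_cocartesian C A (insert_id C A i) (insert_map C A i)"
  using part1[OF assms] part2[OF assms] by simp

end
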